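(* For every $W\in\mathrm{Gr}^{ad}$ and every $\gamma=e^{p(z)}\in\Gamma$, one has $R_{\gamma W}=\gamma R_W\gamma^{-1}=\Phi_p(R_W)$. In particular, under the bijection $W\mapsto[R_W]$ from $\mathrm{Gr}^{ad}$ to $\mathcal R$, the action of the automorphism $\Phi_p$ on $\mathcal R$ corresponds to $W\mapsto e^{p(z)}W$.
   Context: $A_1=\mathbb C[z,\partial]$, $\partial=d/dz$; $\Phi_p(D)=e^{p(z)}De^{-p(z)}$. $\mathcal R$ = isomorphism classes of nonzero right ideals of $A_1$, with automorphisms acting by $\sigma\star[I]=[\sigma(I)]$. $\mathrm{Gr}^{ad}$: subspaces $W=m_V^{-1}V\subset\mathbb C(z)$ where $V\subset\mathbb C[z]$ is a finite intersection of subspaces $V_\lambda\supset(z-\lambda)^{r}\mathbb C[z]$ (distinct $\lambda$) and $m_V=\prod(z-\lambda)^{\dim\mathbb C[z]/V_\lambda}$. $\Gamma=\{e^{p(z)}\}$ acts by $\gamma W=m_V^{-1}((\gamma\overline V)\cap\mathbb C[z])$, $\overline V$ the closure of $V$ in the space of entire functions with compact-open topology. $R_W=\{D\in\mathbb C(z)[\partial]: D.\mathbb C[z]\subset W\}$, a fractional right ideal of $A_1$. *)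

theory Defs
  imports "HOL-Analysis.Analysis" "HOL-Computational_Algebra.Computational_Algebra"
begin

type_synonym ratfun = "complex poly fract"

text \<open>Derivative of a rational function a/b: (a' b - a b') / b^2; this value does not
  depend on the chosen representative (a, b) with b nonzero.\<close>
definition rderiv :: "ratfun \<Rightarrow> ratfun" where
  "rderiv x = (SOME y. \<forall>a b. b \<noteq> 0 \<longrightarrow> x = Fract a b \<longrightarrow>
      y = Fract (pderiv a * b - a * pderiv b) (b * b))"

text \<open>An operator D = sum_i a_i d^i (coefficients written on the left) is encoded by
  the polynomial in d with coefficients a_i in C(z); only the coefficients are used,
  composition is defined separately below.\<close>
type_synonym dop = "ratfun poly"

definition dapply :: "dop \<Rightarrow> ratfun \<Rightarrow> ratfun" where
  "dapply D f = (\<Sum>i\<le>degree D. coeff D i * (rderiv ^^ i) f)"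

text \<open>Left composition with d: d o (sum_j b_j d^j) = sum_j (b_j' d^j + b_j d^(j+1)).\<close>
definition dz_comp :: "dop \<Rightarrow> dop" where
  "dz_comp E = map_poly rderiv E + pCons 0 E"

text \<open>The operator (d - q)^i, computed by left multiplication.\<close>
primrec shift_pow :: "ratfun \<Rightarrow> nat \<Rightarrow> dop" where
  "shift_pow q 0 = 1"
| "shift_pow q (Suc i) = dz_comp (shift_pow q i) - smult q (shift_pow q i)"

text \<open>Phi_p(D) = e^p D e^(-p).  Since e^p d e^(-p) = d - p', one has
  Phi_p(sum_i a_i d^i) = sum_i a_i (d - p')^i.\<close>
definition Phi :: "complex poly \<Rightarrow> dop \<Rightarrow> dop" where
  "Phi p D = (\<Sum>i\<le>degree D. smult (coeff D i) (shift_pow (to_fract (pderiv p)) i))"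

definition R_of :: "ratfun set \<Rightarrow> dop set" where
  "R_of W = {D. \<forall>q :: complex poly. dapply D (to_fract q) \<in> W}"

definition csubspace_poly :: "complex poly set \<Rightarrow> bool" where
  "csubspace_poly V \<longleftrightarrow> 0 \<in> V \<and> (\<forall>x\<in>V. \<forall>y\<in>V. x + y \<in> V) \<and> (\<forall>c. \<forall>x\<in>V. smult c x \<in> V)"

definition codim_poly :: "complex poly set \<Rightarrow> nat" where
  "codim_poly V = (LEAST n. \<exists>B. finite B \<and> card B = n \<and>
      (\<forall>q. \<exists>v\<in>V. \<exists>c. q = v + (\<Sum>b\<in>B. smult (c b) b)))"

definition adelic_data :: "complex set \<Rightarrow> (complex \<Rightarrow> complex poly set) \<Rightarrow> bool" where
  "adelic_data Lam Vs \<longleftrightarrow> finite Lam \<and>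
     (\<forall>lam\<in>Lam. csubspace_poly (Vs lam) \<and>
        (\<exists>r. \<forall>q. [:-lam, 1:] ^ r * q \<in> Vs lam))"

definition V_of :: "complex set \<Rightarrow> (complex \<Rightarrow> complex poly set) \<Rightarrow> complex poly set" where
  "V_of Lam Vs = (\<Inter>lam\<in>Lam. Vs lam)"

definition m_of :: "complex set \<Rightarrow> (complex \<Rightarrow> complex poly set) \<Rightarrow> complex poly" where
  "m_of Lam Vs = (\<Prod>lam\<in>Lam. [:-lam, 1:] ^ codim_poly (Vs lam))"

definition W_of :: "complex set \<Rightarrow> (complex \<Rightarrow> complex poly set) \<Rightarrow> ratfun set" where
  "W_of Lam Vs = {Fract v (m_of Lam Vs) | v. v \<in> V_of Lam Vs}"

definition Gr_ad :: "ratfun set set" where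
  "Gr_ad = {W_of Lam Vs | Lam Vs. adelic_data Lam Vs}"

text \<open>Closure of a set of polynomials in the space of entire functions with the
  compact-open topology (= topology of uniform convergence on compact sets, whose
  basic neighbourhoods are {g. sup_K |g - f| < e}).\<close>
definition ent_closure :: "complex poly set \<Rightarrow> (complex \<Rightarrow> complex) set" where
  "ent_closure V = {f. f holomorphic_on UNIV \<and>
      (\<forall>K e. compact K \<and> e > 0 \<longrightarrow> (\<exists>v\<in>V. \<forall>z\<in>K. norm (poly v z - f z) < e))}"

definition gamma_polys :: "complex poly \<Rightarrow> complex poly set \<Rightarrow> complex poly set" where
  "gamma_polys p V = {q. \<exists>f\<in>ent_closure V. \<forall>z. poly q z = exp (poly p z) * f z}"

text \<open>gamma W = m_V^(-1) ((gamma V-bar) intersected with C[z]).\<close>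
definition gamma_act :: "complex poly \<Rightarrow> complex set \<Rightarrow> (complex \<Rightarrow> complex poly set) \<Rightarrow> ratfun set" where
  "gamma_act p Lam Vs = {Fract q (m_of Lam Vs) | q. q \<in> gamma_polys p (V_of Lam Vs)}"

end

theory Submission
  imports Defs "HOL-Complex_Analysis.Complex_Analysis"
begin

lemma rderiv_wd_aux:
  fixes a b c d :: "complex poly"
  assumes b: "b \<noteq> 0" and d: "d \<noteq> 0" and e: "a * d = c * b"
  shows "Fract (pderiv a * b - a * pderiv b) (b * b) = Fract (pderiv c * d - c * pderiv d) (d * d)"
proof -
  have e': "pderiv a * d + a * pderiv d = pderiv c * b + c * pderiv b"
    using arg_cong[OF e, of pderiv] by (simp add: pderiv_mult algebra_simps)
  have X: "pderiv a * d + a * pderiv d - pderiv c * b - c * pderiv b = 0" using e' by simp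
  have Y: "a * d - c * b = 0" using e by simp
  have "(pderiv a * b - a * pderiv b) * (d * d) - (pderiv c * d - c * pderiv d) * (b * b)
     = b * d * (pderiv a * d + a * pderiv d - pderiv c * b - c * pderiv b)
       - (a * d - c * b) * (pderiv b * d + b * pderiv d)"
    by (simp add: algebra_simps)
  also have "\<dots> = 0" by (simp only: X Y) simp
  finally have "(pderiv a * b - a * pderiv b) * (d * d) = (pderiv c * d - c * pderiv d) * (b * b)"
    by simp
  thus ?thesis using b d by (simp add: eq_fract)
qed

lemma rderiv_Fract:
  assumes "b \<noteq> 0"
  shows "rderiv (Fract a b) = Fract (pderiv a * b - a * pderiv b) (b * b)"
proof -
  let ?P = "\<lambda>y. \<forall>a' b'. b' \<noteq> 0 \<longrightarrow> Fract a b = Fract a' b' \<longrightarrow>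
      y = Fract (pderiv a' * b' - a' * pderiv b') (b' * b')"
  have ex: "?P (Fract (pderiv a * b - a * pderiv b) (b * b))"
  proof (intro allI impI)
    fix a' b' :: "complex poly" assume b': "b' \<noteq> 0" and eq: "Fract a b = Fract a' b'"
    then have "a * b' = a' * b" using assms by (simp add: eq_fract)
    then show "Fract (pderiv a * b - a * pderiv b) (b * b) = Fract (pderiv a' * b' - a' * pderiv b') (b' * b')"
      using rderiv_wd_aux[OF assms b'] by simp
  qed
  have "?P (rderiv (Fract a b))" unfolding rderiv_def by (rule someI, rule ex)
  thus ?thesis using assms by auto
qed

lemma rderiv_to_fract [simp]: "rderiv (to_fract q) = to_fract (pderiv q)"
  by (simp add: to_fract_def rderiv_Fract)

lemma rderiv_0 [simp]: "rderiv 0 = 0"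
  using rderiv_to_fract[of 0] by simp

lemma rderiv_add [simp]: "rderiv (x + y) = rderiv x + rderiv y"
proof (cases x; cases y)
  fix a b c d :: "complex poly" assume x: "x = Fract a b" "b \<noteq> 0" and y: "y = Fract c d" "d \<noteq> 0"
  show ?thesis using x y
    by (simp add: rderiv_Fract eq_fract pderiv_mult pderiv_add algebra_simps)
qed

lemma rderiv_mult: "rderiv (x * y) = rderiv x * y + x * rderiv y"
proof (cases x; cases y)
  fix a b c d :: "complex poly" assume x: "x = Fract a b" "b \<noteq> 0" and y: "y = Fract c d" "d \<noteq> 0"
  show ?thesis using x y
    by (simp add: rderiv_Fract eq_fract pderiv_mult pderiv_add algebra_simps)
qed

lemma rderiv_minus [simp]: "rderiv (- x) = - rderiv x"
  using rderiv_add[of x "-x"] by (simp add: eq_neg_iff_add_eq_0 add.commute)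

lemma rderiv_diff [simp]: "rderiv (x - y) = rderiv x - rderiv y"
  using rderiv_add[of x "-y"] by simp

lemma rderiv_sum: "rderiv (sum f A) = (\<Sum>i\<in>A. rderiv (f i))"
  by (induction A rule: infinite_finite_induct) auto

definition app :: "(ratfun \<Rightarrow> ratfun) \<Rightarrow> dop \<Rightarrow> ratfun \<Rightarrow> ratfun" where
  "app L E f = (\<Sum>i\<le>degree E. coeff E i * (L ^^ i) f)"

lemma dapply_app: "dapply = app rderiv"
  by (intro ext) (simp add: dapply_def app_def)

lemma app_bound:
  assumes "degree E \<le> N"
  shows "app L E f = (\<Sum>i\<le>N. coeff E i * (L ^^ i) f)"
  unfolding app_def
  by (rule sum.mono_neutral_left) (use assms in \<open>auto simp: coeff_eq_0\<close>)

lemma app_add: "app L (E + F) f = app L E f + app L F f"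
proof -
  let ?N = "max (degree E) (degree F)"
  have "degree (E + F) \<le> ?N" by (rule degree_add_le) auto
  then show ?thesis
    by (simp add: app_bound[of _ ?N] app_bound[of E ?N] app_bound[of F ?N] sum.distrib algebra_simps)
qed

lemma app_smult: "app L (smult c E) f = c * app L E f"
  by (simp add: app_bound[of "smult c E" "degree E"] app_def sum_distrib_left mult.assoc)

lemma app_0 [simp]: "app L 0 f = 0"
  by (simp add: app_def)

lemma app_1 [simp]: "app L 1 f = f"
  by (simp add: app_def)

lemma app_minus: "app L (- E) f = - app L E f"
  using app_add[of L E "-E" f] by (simp add: eq_neg_iff_add_eq_0 add.commute)

lemma app_diff: "app L (E - F) f = app L E f - app L F f"
  using app_add[of L E "-F" f] by (simp add: app_minus)

lemma app_sum: "app L (sum g A) f = (\<Sum>i\<in>A. app L (g i) f)"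
  by (induction A rule: infinite_finite_induct) (auto simp: app_add)

definition derivlike :: "(ratfun \<Rightarrow> ratfun) \<Rightarrow> bool" where
  "derivlike L \<longleftrightarrow> (\<forall>x y. L (x + y) = L x + L y) \<and> (\<forall>x y. L (x * y) = rderiv x * y + x * L y)"

lemma derivlike_0: "derivlike L \<Longrightarrow> L 0 = 0"
  unfolding derivlike_def by (metis add_cancel_right_right add_0)

lemma derivlike_sum: "derivlike L \<Longrightarrow> L (sum g A) = (\<Sum>i\<in>A. L (g i))"
  by (induction A rule: infinite_finite_induct) (auto simp: derivlike_0 derivlike_def)

lemma derivlike_rderiv: "derivlike rderiv"
  by (simp add: derivlike_def rderiv_mult)

lemma derivlike_shift: "derivlike L \<Longrightarrow> derivlike (\<lambda>y. L y - c * y)"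
  by (simp add: derivlike_def algebra_simps)

lemma app_dz_comp:
  assumes L: "derivlike L"
  shows "app L (dz_comp E) f = L (app L E f)"
proof -
  let ?N = "Suc (degree E)"
  have d1: "degree (map_poly rderiv E) \<le> ?N"
    by (rule order.trans[OF _ le_SucI[OF order.refl]], rule degree_le) (simp add: coeff_map_poly coeff_eq_0)
  have d2: "degree (pCons 0 E) \<le> ?N"
    by (simp add: degree_pCons_le)
  have c1: "coeff (map_poly rderiv E) i = rderiv (coeff E i)" for i
    by (simp add: coeff_map_poly)
  have "app L (map_poly rderiv E) f = (\<Sum>i\<le>degree E. rderiv (coeff E i) * (L ^^ i) f)"
    by (simp add: app_bound[OF d1] c1 coeff_eq_0)
  moreover have "app L (pCons 0 E) f = (\<Sum>i\<le>degree E. coeff E i * (L ^^ Suc i) f)"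
    by (simp only: app_bound[OF d2] sum.atMost_Suc_shift) simp
  moreover have "L (app L E f) = (\<Sum>i\<le>degree E. rderiv (coeff E i) * (L ^^ i) f + coeff E i * (L ^^ Suc i) f)"
    using L by (simp add: app_def derivlike_sum derivlike_def)
  ultimately show ?thesis
    by (simp add: dz_comp_def app_add sum.distrib del: funpow.simps)
qed

lemma app_shift_pow:
  assumes L: "derivlike L"
  shows "app L (shift_pow c i) f = ((\<lambda>y. L y - c * y) ^^ i) f"
proof (induction i)
  case 0 then show ?case by simp
next
  case (Suc i)
  then show ?case
    by (simp add: app_diff app_smult app_dz_comp[OF L])
qed

lemma app_Phi:
  assumes L: "derivlike L"
  shows "app L (Phi p E) f = app (\<lambda>y. L y - to_fract (pderiv p) * y) E f"
proof -
  have "app L (Phi p E) f = (\<Sum>i\<le>degree E. coeff E i * ((\<lambda>y. L y - to_fract (pderiv p) * y) ^^ i) f)"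
    by (simp add: Phi_def app_sum app_smult app_shift_pow[OF L])
  then show ?thesis by (simp add: app_def)
qed

lemma rderiv_pow_to_fract: "(rderiv ^^ i) (to_fract q) = to_fract ((pderiv ^^ i) q)"
  by (induction i) auto

lemma higher_pderiv_monom_gt:
  assumes "i > k" shows "(pderiv ^^ i) (monom (1::complex) k) = 0"
  by (rule poly_eqI) (use assms in \<open>simp add: coeff_higher_pderiv coeff_monom\<close>)

lemma higher_pderiv_monom_eq:
  "(pderiv ^^ k) (monom (1::complex) k) = [:fact k:]"
proof (rule poly_eqI)
  fix n show "coeff ((pderiv ^^ k) (monom (1::complex) k)) n = coeff [:fact k:] n"
    by (cases n) (simp_all add: coeff_higher_pderiv coeff_monom pochhammer_fact)
qed

lemma app_inj:
  assumes "\<And>q. app rderiv E (to_fract q) = 0"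
  shows "E = 0"
proof -
  have "coeff E k = 0" for k
  proof (induction k rule: less_induct)
    case (less k)
    show ?case
    proof (cases "k \<le> degree E")
      case False then show ?thesis by (simp add: coeff_eq_0)
    next
      case True
      have t: "coeff E i * (rderiv ^^ i) (to_fract (monom 1 k)) = 0" if "i \<noteq> k" for i
      proof (cases "i < k")
        case True then show ?thesis using less by simp
      next
        case False then have "i > k" using that by simp
        then show ?thesis by (simp add: rderiv_pow_to_fract higher_pderiv_monom_gt)
      qed
      have "0 = app rderiv E (to_fract (monom 1 k))" using assms by simp
      also have "\<dots> = coeff E k * (rderiv ^^ k) (to_fract (monom 1 k)) +
          (\<Sum>i\<in>{..degree E} - {k}. coeff E i * (rderiv ^^ i) (to_fract (monom 1 k)))"
        unfolding app_def using True by (subst sum.remove[of _ k]) auto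
      also have "(\<Sum>i\<in>{..degree E} - {k}. coeff E i * (rderiv ^^ i) (to_fract (monom 1 k))) = 0"
        using t by (intro sum.neutral) auto
      also have "coeff E k * (rderiv ^^ k) (to_fract (monom 1 k)) + 0 = coeff E k * to_fract [:fact k:]"
        by (simp add: rderiv_pow_to_fract higher_pderiv_monom_eq)
      finally show ?thesis by simp
    qed
  qed
  then show ?thesis by (simp add: poly_eqI)
qed

lemma Phi_inverse: "Phi p (Phi (-p) D) = D"
proof -
  have "app rderiv (Phi p (Phi (-p) D) - D) f = 0" for f
  proof -
    have e: "(\<lambda>y. rderiv y - to_fract (pderiv p) * y - to_fract (pderiv (- p)) * y) = rderiv"
      by (auto simp: pderiv_minus)
    show ?thesis
      by (simp add: app_diff app_Phi derivlike_rderiv derivlike_shift e)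
  qed
  then have "Phi p (Phi (-p) D) - D = 0" by (intro app_inj)
  then show ?thesis by simp
qed


definition ell :: "complex poly \<Rightarrow> complex poly \<Rightarrow> complex poly" where
  "ell p q = pderiv q - pderiv p * q"

lemma deriv_exp_poly:
  "deriv (\<lambda>z. exp (- poly p z) * poly Q z) = (\<lambda>z. exp (- poly p z) * poly (ell p Q) z)"
proof
  fix z
  have "((\<lambda>z. exp (- poly p z) * poly Q z) has_field_derivative
      exp (- poly p z) * poly (ell p Q) z) (at z)"
    by (auto intro!: derivative_eq_intros poly_DERIV simp: ell_def algebra_simps)
  then show "deriv (\<lambda>z. exp (- poly p z) * poly Q z) z = exp (- poly p z) * poly (ell p Q) z"
    by (rule DERIV_imp_deriv)
qed

lemma higher_deriv_exp_poly:
  "(deriv ^^ i) (\<lambda>z. exp (- poly p z) * poly q z) = (\<lambda>z. exp (- poly p z) * poly ((ell p ^^ i) q) z)"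
  by (induction i) (simp_all add: deriv_exp_poly)

lemma deriv_poly_fun: "deriv (poly Q) = poly (pderiv Q)"
  by (intro ext DERIV_imp_deriv poly_DERIV)

lemma higher_deriv_poly: "(deriv ^^ i) (poly T) = poly ((pderiv ^^ i) T)"
  by (induction i) (simp_all add: deriv_poly_fun)

lemma cauchy_deriv_bound:
  fixes h :: "complex \<Rightarrow> complex"
  assumes h: "h holomorphic_on UNIV" and b: "\<And>w. w \<in> cball c (R + 1) \<Longrightarrow> cmod (h w) < e"
    and z: "z \<in> cball c R"
  shows "cmod ((deriv ^^ i) h z) \<le> fact i * e"
proof (cases "i = 0")
  case True then show ?thesis using b[of z] z by (simp add: dist_norm)
next
  case False
  have sub: "ball z 1 \<subseteq> cball c (R + 1)" using z
    by (auto simp: dist_norm mem_cball mem_ball) (metis add.commute add_le_cancel_right dist_commute dist_norm dist_triangle2 order_trans less_eq_real_def)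
  have "cmod ((deriv ^^ i) h z) \<le> fact i * e / 1 ^ i"
  proof (rule Cauchy_higher_deriv_bound[where y = 0])
    show "h holomorphic_on ball z 1" using h by (rule holomorphic_on_subset) auto
    show "continuous_on (cball z 1) h" using h holomorphic_on_imp_continuous_on
      by (metis continuous_on_subset top_greatest)
    show "\<And>w. w \<in> ball z 1 \<Longrightarrow> h w \<in> ball 0 e" using b sub by (auto simp: dist_norm)
  qed (use False in auto)
  then show ?thesis by simp
qed

lemma max_modulus_cball:
  fixes h :: "complex \<Rightarrow> complex"
  assumes h: "h holomorphic_on UNIV" and r: "r > 0"
    and b: "\<And>w. cmod w = r \<Longrightarrow> cmod (h w) \<le> B" and z: "cmod z \<le> r"
  shows "cmod (h z) \<le> B"
proof (rule maximum_modulus_frontier[of h "cball 0 r"])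
  show "h holomorphic_on interior (cball 0 r)" using h by (rule holomorphic_on_subset) auto
  show "continuous_on (closure (cball 0 r)) h" using h holomorphic_on_imp_continuous_on
    by (metis continuous_on_subset top_greatest)
  show "\<And>w. w \<in> frontier (cball 0 r) \<Longrightarrow> cmod (h w) \<le> B" using b r by (auto simp: frontier_cball)
qed (use z in auto)

lemma poly_dvd_from_bound:
  fixes A B :: "complex poly"
  assumes "B \<noteq> 0" "\<And>z. poly B z = 0 \<Longrightarrow> cmod z < r"
    and "\<And>z. cmod z < r \<Longrightarrow> cmod (poly A z) \<le> C * cmod (poly B z)"
  shows "B dvd A"
  using assms
proof (induction "degree B" arbitrary: A B rule: less_induct)
  case less
  show ?case
  proof (cases "degree B = 0")
    case True
    then obtain c where "B = [:c:]" by (metis degree_0_id)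
    with less.prems(1) have "c \<noteq> 0" by auto
    then show ?thesis using \<open>B = [:c:]\<close> by (simp add: const_poly_dvd_iff dvd_field_iff)
  next
    case False
    then obtain z0 where z0: "poly B z0 = 0" using alg_closed_imp_poly_has_root by blast
    then have r0: "cmod z0 < r" using less.prems(2) by auto
    have "cmod (poly A z0) \<le> 0" using less.prems(3)[OF r0] z0 by simp
    then have "poly A z0 = 0" by simp
    then obtain A1 where A1: "A = [:-z0, 1:] * A1" using poly_eq_0_iff_dvd by (metis dvdE)
    obtain B1 where B1: "B = [:-z0, 1:] * B1" using z0 poly_eq_0_iff_dvd by (metis dvdE)
    have B1nz: "B1 \<noteq> 0" using B1 less.prems(1) by auto
    have "degree B = degree [:-z0, 1:] + degree B1" unfolding B1
      by (rule degree_mult_eq) (use B1nz in auto)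
    then have dB: "degree B1 < degree B" by simp
    have roots: "poly B1 z = 0 \<Longrightarrow> cmod z < r" for z
      using less.prems(2)[of z] B1 by simp
    have bnd: "cmod (poly A1 z) \<le> C * cmod (poly B1 z)" if zr: "cmod z < r" for z
    proof -
      let ?phi = "\<lambda>w. C * cmod (poly B1 w) - cmod (poly A1 w)"
      have lim: "(?phi \<longlongrightarrow> ?phi z) (at z)"
        by (intro tendsto_intros continuous_imp_tendsto)
      have ev: "\<forall>\<^sub>F w in at z. 0 \<le> ?phi w"
      proof -
        have "\<forall>\<^sub>F w in at z. w \<in> ball 0 r" using zr
          by (intro eventually_at_in_open') auto
        moreover have "\<forall>\<^sub>F w in at z. w \<noteq> z0"
          by (rule eventually_neq_at_within) 
        ultimately show ?thesis
        proof eventually_elim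
          case (elim w)
          have "cmod (poly A w) \<le> C * cmod (poly B w)" using less.prems(3)[of w] elim by auto
          then have "cmod (w - z0) * cmod (poly A1 w) \<le> cmod (w - z0) * (C * cmod (poly B1 w))"
          proof -
            have eA: "poly A w = (w - z0) * poly A1 w" and eB: "poly B w = (w - z0) * poly B1 w"
              by (simp_all add: A1 B1 algebra_simps)
            have nA: "cmod (poly A w) = cmod (w - z0) * cmod (poly A1 w)" by (simp only: eA norm_mult)
            have nB: "cmod (poly B w) = cmod (w - z0) * cmod (poly B1 w)" by (simp only: eB norm_mult)
            show ?thesis using \<open>cmod (poly A w) \<le> C * cmod (poly B w)\<close>
              by (simp only: nA nB mult.left_commute)
          qed
          moreover have "cmod (w - z0) > 0" using elim by auto
          ultimately show ?case by simp
        qed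
      qed
      show ?thesis using tendsto_lowerbound[OF lim ev] by simp
    qed
    have "B1 dvd A1" using less.hyps[OF dB B1nz roots bnd] by blast
    then show ?thesis unfolding A1 B1 by (rule mult_dvd_mono[OF dvd_refl])
  qed
qed


lemma entire_poly_approx:
  fixes g :: "complex \<Rightarrow> complex"
  assumes g: "g holomorphic_on UNIV" and e: "e > 0"
  shows "\<exists>T. \<forall>z\<in>cball 0 R. cmod (poly T z - g z) < e"
proof -
  define R' where "R' = max R 0"
  define r where "r = 2 * R' + 2"
  have R'0: "R' \<ge> 0" and r0: "r > 0" unfolding R'_def r_def by auto
  have gc: "continuous_on UNIV g" using g holomorphic_on_imp_continuous_on by blast
  have "compact (g ` cball 0 r)"
    by (rule compact_continuous_image) (use gc continuous_on_subset in auto)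
  then obtain M where M0: "M > 0" and M: "\<And>w. w \<in> cball 0 r \<Longrightarrow> cmod (g w) \<le> M"
    using compact_imp_bounded bounded_pos by (metis image_eqI)
  define c where "c n = (deriv ^^ n) g 0 / fact n" for n
  have cb: "cmod (c n) \<le> (M + 1) / r ^ n" for n
  proof (cases "n = 0")
    case True then show ?thesis using M[of 0] r0 by (simp add: c_def)
  next
    case False
    have "cmod ((deriv ^^ n) g 0) \<le> fact n * (M + 1) / r ^ n"
    proof (rule Cauchy_higher_deriv_bound[where y = 0])
      show "g holomorphic_on ball 0 r" using g by (rule holomorphic_on_subset) auto
      show "continuous_on (cball 0 r) g" using gc continuous_on_subset by blast
      fix w :: complex assume "w \<in> ball 0 r"
      then have "cmod (g w) \<le> M" using M by auto
      then show "g w \<in> ball 0 (M + 1)" by (simp add: dist_norm)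
    qed (use False r0 in auto)
    then show ?thesis by (simp add: c_def norm_divide field_simps)
  qed
  have zb: "cmod (c n * z ^ n) \<le> (M + 1) * (1/2) ^ n" if z: "z \<in> cball 0 R" for z n
  proof -
    have nz: "cmod z \<le> R'" using z by (auto simp: R'_def dist_norm)
    have "cmod (c n * z ^ n) \<le> (M + 1) / r ^ n * R' ^ n"
      unfolding norm_mult norm_power
      by (rule mult_mono[OF cb power_mono[OF nz]]) (use M0 r0 R'0 in auto)
    also have "\<dots> = (M + 1) * (R' / r) ^ n" by (simp add: power_divide)
    also have "\<dots> \<le> (M + 1) * (1/2) ^ n"
      by (rule mult_left_mono[OF power_mono]) (use M0 r0 R'0 in \<open>auto simp: r_def field_simps\<close>)
    finally show ?thesis .
  qed
  obtain N where N: "(1/2::real) ^ N < e / (2 * (M + 1))"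
    using real_arch_pow_inv[of "e / (2 * (M + 1))" "1/2::real"] e M0 by auto
  define T where "T = (\<Sum>n<N. monom (c n) n)"
  have "cmod (poly T z - g z) < e" if z: "z \<in> cball 0 R" for z
  proof -
    have zr: "z \<in> ball 0 r" using z by (auto simp: R'_def r_def dist_norm)
    have s: "(\<lambda>n. c n * z ^ n) sums g z"
      using holomorphic_power_series[OF holomorphic_on_subset[OF g] zr] by (simp add: c_def)
    have s2: "(\<lambda>i. c (i + N) * z ^ (i + N)) sums (g z - poly T z)"
      using sums_split_initial_segment[OF s, of N] by (simp add: T_def poly_sum poly_monom)
    have sumb: "summable (\<lambda>i. (M + 1) * (1/2) ^ N * (1/2::real) ^ i)"
      by (intro summable_mult summable_geometric) auto
    have "cmod (g z - poly T z) \<le> (\<Sum>i. (M + 1) * (1/2) ^ N * (1/2::real) ^ i)"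
      unfolding sums_unique[OF s2]
    proof (rule norm_suminf_le[OF _ sumb])
      fix i show "cmod (c (i + N) * z ^ (i + N)) \<le> (M + 1) * (1/2) ^ N * (1/2) ^ i"
        using zb[OF z, of "i + N"] by (simp add: power_add mult_ac)
    qed
    also have "\<dots> = (M + 1) * (1/2) ^ N * 2"
      by (subst suminf_mult) (auto simp: suminf_geometric)
    also have "\<dots> < e" using N M0 by (simp add: field_simps)
    finally show ?thesis by (simp add: norm_minus_commute)
  qed
  then show ?thesis by blast
qed


lemma fd_closed:
  fixes U :: "(nat \<Rightarrow> complex) set"
  assumes "(\<lambda>k. 0) \<in> U" "\<And>x y. x \<in> U \<Longrightarrow> y \<in> U \<Longrightarrow> (\<lambda>k. x k + y k) \<in> U"
    "\<And>c x. x \<in> U \<Longrightarrow> (\<lambda>k. c * x k) \<in> U"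
    "\<And>d. d > 0 \<Longrightarrow> \<exists>u\<in>U. \<forall>k<r. cmod (u k - x k) \<le> d"
  shows "\<exists>u\<in>U. \<forall>k<r. u k = x k"
  using assms
proof (induction r arbitrary: U x)
  case 0 then show ?case by blast
next
  case (Suc r)
  show ?case
  proof (cases "\<exists>w\<in>U. w r \<noteq> 0")
    case True
    then obtain w0 where w0: "w0 \<in> U" "w0 r \<noteq> 0" by blast
    define w where "w = (\<lambda>k. (1 / w0 r) * w0 k)"
    have wU: "w \<in> U" unfolding w_def using Suc.prems(3) w0 by blast
    have wr: "w r = 1" using w0 by (simp add: w_def)
    define U' where "U' = {u\<in>U. u r = 0}"
    define x' where "x' = (\<lambda>k. x k - x r * w k)"
    define Mw where "Mw = (\<Sum>k<Suc r. cmod (w k))"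
    have Mw: "cmod (w k) \<le> Mw" if "k < Suc r" for k
      unfolding Mw_def using that by (intro member_le_sum) auto
    have Mw0: "Mw \<ge> 0" unfolding Mw_def by (simp add: sum_nonneg)
    have minus: "u \<in> U \<Longrightarrow> v \<in> U \<Longrightarrow> (\<lambda>k. u k - c * v k) \<in> U" for u v c
      using Suc.prems(2)[of u "\<lambda>k. (- c) * v k"] Suc.prems(3)[of v "-c"] by simp
    have "\<exists>u\<in>U'. \<forall>k<r. u k = x' k"
    proof (rule Suc.IH)
      show "(\<lambda>k. 0) \<in> U'" using Suc.prems(1) by (simp add: U'_def)
      show "\<And>a b. a \<in> U' \<Longrightarrow> b \<in> U' \<Longrightarrow> (\<lambda>k. a k + b k) \<in> U'"
        using Suc.prems(2) by (auto simp: U'_def)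
      show "\<And>c a. a \<in> U' \<Longrightarrow> (\<lambda>k. c * a k) \<in> U'"
        using Suc.prems(3) by (auto simp: U'_def)
      fix d :: real assume d: "d > 0"
      obtain u where u: "u \<in> U" "\<forall>k<Suc r. cmod (u k - x k) \<le> d / (1 + Mw)"
        using Suc.prems(4)[of "d / (1 + Mw)"] d Mw0 by auto
      define u' where "u' = (\<lambda>k. u k - u r * w k)"
      have "u' \<in> U'" unfolding U'_def u'_def using minus[OF u(1) wU] wr by simp
      moreover have "cmod (u' k - x' k) \<le> d" if k: "k < r" for k
      proof -
        have "u' k - x' k = (u k - x k) - (u r - x r) * w k"
          by (simp add: u'_def x'_def algebra_simps)
        then have "cmod (u' k - x' k) \<le> cmod (u k - x k) + cmod (u r - x r) * cmod (w k)"
          by (metis norm_mult norm_triangle_ineq4)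
        also have "\<dots> \<le> d / (1 + Mw) + d / (1 + Mw) * Mw"
          using u(2) k Mw[of k] d Mw0 by (intro add_mono mult_mono) auto
        also have "\<dots> = d / (1 + Mw) * (1 + Mw)" by (simp only: distrib_left mult_1_right)
        also have "\<dots> = d" using Mw0 by simp
        finally show ?thesis .
      qed
      ultimately show "\<exists>u\<in>U'. \<forall>k<r. cmod (u k - x' k) \<le> d" by blast
    qed
    then obtain u' where u': "u' \<in> U'" "\<forall>k<r. u' k = x' k" by blast
    define u where "u = (\<lambda>k. u' k + x r * w k)"
    have "u \<in> U" unfolding u_def using Suc.prems(2)[of u' "\<lambda>k. x r * w k"] Suc.prems(3)[OF wU] u'(1)
      by (auto simp: U'_def)
    moreover have "\<forall>k<Suc r. u k = x k"
    proof (intro allI impI)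
      fix k assume "k < Suc r"
      then consider "k < r" | "k = r" by linarith
      then show "u k = x k"
        by cases (use u' wr in \<open>auto simp: u_def x'_def U'_def\<close>)
    qed
    ultimately show ?thesis by blast
  next
    case False
    have xr: "x r = 0"
    proof (rule ccontr)
      assume "x r \<noteq> 0"
      then obtain u where "u \<in> U" "\<forall>k<Suc r. cmod (u k - x k) \<le> cmod (x r) / 2"
        using Suc.prems(4)[of "cmod (x r) / 2"] by auto
      then have "cmod (u r - x r) \<le> cmod (x r) / 2" by auto
      moreover have "u r = 0" using False \<open>u \<in> U\<close> by auto
      ultimately show False using \<open>x r \<noteq> 0\<close> by simp
    qed
    have "\<exists>u\<in>U. \<forall>k<r. u k = x k"
    proof (rule Suc.IH)
      show "(\<lambda>k. 0) \<in> U" by (rule Suc.prems(1))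
      show "\<And>a b. a \<in> U \<Longrightarrow> b \<in> U \<Longrightarrow> (\<lambda>k. a k + b k) \<in> U" by (rule Suc.prems(2))
      show "\<And>c a. a \<in> U \<Longrightarrow> (\<lambda>k. c * a k) \<in> U" by (rule Suc.prems(3))
      fix d :: real assume "d > 0"
      then obtain u where "u \<in> U" "\<forall>k<Suc r. cmod (u k - x k) \<le> d" using Suc.prems(4) by blast
      then show "\<exists>u\<in>U. \<forall>k<r. cmod (u k - x k) \<le> d" by (metis less_SucI)
    qed
    then obtain u where "u \<in> U" "\<forall>k<r. u k = x k" by blast
    moreover have "u r = x r" using False \<open>u \<in> U\<close> xr by auto
    ultimately show ?thesis by (metis less_Suc_eq)
  qed
qed


lemma ent_closureD:
  assumes "f \<in> ent_closure V" "compact K" "e > 0"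
  shows "\<exists>v\<in>V. \<forall>z\<in>K. cmod (poly v z - f z) < e"
  using assms unfolding ent_closure_def by blast

lemma ent_closure_holo: "f \<in> ent_closure V \<Longrightarrow> f holomorphic_on UNIV"
  unfolding ent_closure_def by blast

lemma poly_holo: "poly P holomorphic_on S"
  unfolding holomorphic_on_def field_differentiable_def
  by (meson has_field_derivative_at_within poly_DERIV)

lemma coeff_bound_from_approx:
  fixes P :: "complex poly"
  assumes "\<And>z. z \<in> cball 0 1 \<Longrightarrow> cmod (poly P z) < d"
  shows "cmod (coeff P k) \<le> d"
proof -
  have "cmod ((deriv ^^ k) (poly P) 0) \<le> fact k * d"
    by (rule cauchy_deriv_bound[where c = 0 and R = 0]) (use assms poly_holo in auto)
  moreover have "(deriv ^^ k) (poly P) 0 = fact k * coeff P k"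
    by (simp add: higher_deriv_poly poly_0_coeff_0 coeff_higher_pderiv pochhammer_fact)
  ultimately have "fact k * cmod (coeff P k) \<le> fact k * d" by (simp add: norm_mult)
  then show ?thesis by simp
qed

lemma closed_point:
  fixes V :: "complex poly set"
  assumes V: "csubspace_poly V" and M: "\<And>q. [:-lam, 1:] ^ r * q \<in> V"
    and v: "poly v \<in> ent_closure V"
  shows "v \<in> V"
proof -
  define J where "J w = (\<lambda>k. coeff (w \<circ>\<^sub>p [:lam, 1:]) k)" for w :: "complex poly"
  define U where "U = J ` V"
  have V0: "0 \<in> V" and Vadd: "\<And>x y. x \<in> V \<Longrightarrow> y \<in> V \<Longrightarrow> x + y \<in> V"
    and Vsm: "\<And>c x. x \<in> V \<Longrightarrow> smult c x \<in> V"
    using V unfolding csubspace_poly_def by auto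
  have "\<exists>u\<in>U. \<forall>k<r. u k = J v k"
  proof (rule fd_closed)
    show "(\<lambda>k. 0) \<in> U" unfolding U_def using V0 by (auto simp: J_def image_iff intro!: bexI[of _ 0])
    show "(\<lambda>k. x k + y k) \<in> U" if hx: "x \<in> U" and hy: "y \<in> U" for x y
    proof -
      obtain a where "a \<in> V" "x = J a" using hx unfolding U_def by blast
      moreover obtain b where "b \<in> V" "y = J b" using hy unfolding U_def by blast
      ultimately show ?thesis unfolding U_def
        by (intro image_eqI[of _ _ "a + b"]) (auto simp: J_def pcompose_add Vadd)
    qed
    show "(\<lambda>k. c * x k) \<in> U" if hx: "x \<in> U" for c x
    proof -
      obtain a where "a \<in> V" "x = J a" using hx unfolding U_def by blast
      then show ?thesis unfolding U_def
        by (intro image_eqI[of _ _ "smult c a"]) (auto simp: J_def pcompose_smult Vsm)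
    qed
    fix d :: real assume d: "d > 0"
    obtain w where w: "w \<in> V" "\<forall>z\<in>cball lam 1. cmod (poly w z - poly v z) < d"
      using ent_closureD[OF v compact_cball d] by blast
    have "cmod (J w k - J v k) \<le> d" for k
    proof -
      have "cmod (coeff ((w - v) \<circ>\<^sub>p [:lam, 1:]) k) \<le> d"
      proof (rule coeff_bound_from_approx)
        fix z :: complex assume "z \<in> cball 0 1"
        then have "lam + z \<in> cball lam 1" by (simp add: dist_norm)
        then show "cmod (poly ((w - v) \<circ>\<^sub>p [:lam, 1:]) z) < d"
          using w(2) by (simp add: poly_pcompose algebra_simps)
      qed
      moreover have "coeff ((w - v) \<circ>\<^sub>p [:lam, 1:]) k = J w k - J v k"
        by (simp add: J_def pcompose_diff)
      ultimately show ?thesis by simp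
    qed
    then show "\<exists>u\<in>U. \<forall>k<r. cmod (u k - J v k) \<le> d" using w(1) unfolding U_def by blast
  qed
  then obtain w where w: "w \<in> V" "\<forall>k<r. J w k = J v k" unfolding U_def by auto
  have "\<forall>k<r. coeff ((v - w) \<circ>\<^sub>p [:lam, 1:]) k = 0"
    using w(2) by (simp add: J_def pcompose_diff)
  then have "monom 1 r dvd (v - w) \<circ>\<^sub>p [:lam, 1:]" by (simp add: monom_1_dvd_iff')
  then obtain Q where Q: "(v - w) \<circ>\<^sub>p [:lam, 1:] = monom 1 r * Q" by (elim dvdE)
  have "v - w = [:-lam, 1:] ^ r * (Q \<circ>\<^sub>p [:-lam, 1:])"
  proof -
    have "poly (v - w) z = poly ([:-lam, 1:] ^ r * (Q \<circ>\<^sub>p [:-lam, 1:])) z" for z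
    proof -
      have "poly ((v - w) \<circ>\<^sub>p [:lam, 1:]) (z - lam) = poly (monom 1 r * Q) (z - lam)"
        by (simp only: Q)
      then show ?thesis by (simp add: poly_pcompose poly_monom)
    qed
    then show ?thesis by (intro poly_eq_poly_eq_iff[THEN iffD1] ext)
  qed
  then have "v - w \<in> V" using M by simp
  then have "w + (v - w) \<in> V" using Vadd w(1) by blast
  then show ?thesis by simp
qed


declare poly_holo [holomorphic_intros]

lemma cont_bound:
  fixes phi :: "complex \<Rightarrow> 'b::real_normed_vector"
  assumes "continuous_on UNIV phi" "compact K"
  shows "\<exists>C>0. \<forall>z\<in>K. norm (phi z) \<le> C"
proof -
  have "compact (phi ` K)"
    by (rule compact_continuous_image) (use assms continuous_on_subset in auto)
  then show ?thesis using compact_imp_bounded bounded_pos by (metis image_eqI)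
qed

lemma approx_step:
  fixes N :: nat and alpha Qs :: "nat \<Rightarrow> complex poly" and beta m u :: "complex poly"
    and H g :: "complex \<Rightarrow> complex" and Fset :: "(complex \<Rightarrow> complex) set"
  assumes H: "H holomorphic_on UNIV" and g: "g holomorphic_on UNIV"
    and hg: "\<And>i z. i \<le> N \<Longrightarrow> H z * (deriv ^^ i) g z = poly m z * exp (poly u z) * poly (Qs i) z"
    and hT: "\<And>T. \<exists>f\<in>Fset. \<forall>z. f z * poly beta z = H z * (\<Sum>i\<le>N. poly (alpha i) z * poly ((pderiv ^^ i) T) z)"
    and d: "d > 0"
  shows "\<exists>f\<in>Fset. \<forall>z\<in>cball 0 R. cmod (f z * poly beta z -
            poly m z * exp (poly u z) * poly (\<Sum>i\<le>N. alpha i * Qs i) z) \<le> d"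
proof -
  define B where "B z = cmod (H z) * (\<Sum>i\<le>N. cmod (poly (alpha i) z) * fact i)" for z
  have Hc: "continuous_on UNIV H" using H holomorphic_on_imp_continuous_on by blast
  have "continuous_on UNIV B" unfolding B_def by (intro continuous_intros Hc)
  then obtain C0 where C0: "C0 > 0" "\<And>z. z \<in> cball 0 R \<Longrightarrow> norm (B z) \<le> C0"
    using cont_bound[of B "cball 0 R"] by auto
  obtain T where T: "\<forall>z\<in>cball 0 (R + 1). cmod (poly T z - g z) < d / C0"
    using entire_poly_approx[OF g, of "d / C0" "R + 1"] d C0 by auto
  obtain f where f: "f \<in> Fset" "\<forall>z. f z * poly beta z = H z * (\<Sum>i\<le>N. poly (alpha i) z * poly ((pderiv ^^ i) T) z)"
    using hT by blast
  have hh: "(\<lambda>z. poly T z - g z) holomorphic_on UNIV" using g by (intro holomorphic_intros)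
  have "cmod (f z * poly beta z - poly m z * exp (poly u z) * poly (\<Sum>i\<le>N. alpha i * Qs i) z) \<le> d"
    if z: "z \<in> cball 0 R" for z
  proof -
    have di: "cmod (poly ((pderiv ^^ i) T) z - (deriv ^^ i) g z) \<le> fact i * (d / C0)" for i
    proof -
      have "cmod ((deriv ^^ i) (\<lambda>z. poly T z - g z) z) \<le> fact i * (d / C0)"
        by (rule cauchy_deriv_bound[OF hh _ z]) (use T in auto)
      moreover have "(deriv ^^ i) (\<lambda>z. poly T z - g z) z = poly ((pderiv ^^ i) T) z - (deriv ^^ i) g z"
        using higher_deriv_diff[of "poly T" UNIV g z i] g
        by (simp add: poly_holo higher_deriv_poly)
      ultimately show ?thesis by simp
    qed
    have "poly m z * exp (poly u z) * poly (\<Sum>i\<le>N. alpha i * Qs i) z =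
        H z * (\<Sum>i\<le>N. poly (alpha i) z * (deriv ^^ i) g z)"
    proof -
      have "H z * (\<Sum>i\<le>N. poly (alpha i) z * (deriv ^^ i) g z) =
          (\<Sum>i\<le>N. poly (alpha i) z * (H z * (deriv ^^ i) g z))"
        by (simp add: sum_distrib_left mult_ac)
      also have "\<dots> = (\<Sum>i\<le>N. poly (alpha i) z * (poly m z * exp (poly u z) * poly (Qs i) z))"
        by (intro sum.cong refl) (simp add: hg)
      also have "\<dots> = poly m z * exp (poly u z) * poly (\<Sum>i\<le>N. alpha i * Qs i) z"
        by (simp add: poly_sum sum_distrib_left mult_ac)
      finally show ?thesis by simp
    qed
    then have "f z * poly beta z - poly m z * exp (poly u z) * poly (\<Sum>i\<le>N. alpha i * Qs i) z =
        H z * (\<Sum>i\<le>N. poly (alpha i) z * (poly ((pderiv ^^ i) T) z - (deriv ^^ i) g z))"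
      using f(2) by (simp add: algebra_simps sum_subtractf)
    also have "cmod \<dots> \<le> cmod (H z) * (\<Sum>i\<le>N. cmod (poly (alpha i) z) * (fact i * (d / C0)))"
    proof -
      have tw: "cmod (poly (alpha i) z * (poly ((pderiv ^^ i) T) z - (deriv ^^ i) g z))
          \<le> cmod (poly (alpha i) z) * (fact i * (d / C0))" for i
        by (simp only: norm_mult) (rule mult_left_mono[OF di], simp)
      show ?thesis
        unfolding norm_mult
        by (intro mult_left_mono order.trans[OF norm_sum] sum_mono tw) simp
    qed
    also have "\<dots> = B z * (d / C0)"
      by (simp add: B_def sum_distrib_right sum_distrib_left sum_divide_distrib[symmetric] mult_ac)
    also have "\<dots> \<le> C0 * (d / C0)"
      using C0(2)[OF z] d C0(1) by (intro mult_right_mono) auto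
    also have "\<dots> = d" using C0 by simp
    finally show ?thesis .
  qed
  then show ?thesis using f(1) by blast
qed


lemma roots_bound:
  fixes beta :: "complex poly"
  assumes "beta \<noteq> 0"
  shows "\<exists>Bz\<ge>0. \<forall>z. poly beta z = 0 \<longrightarrow> cmod z \<le> Bz"
proof -
  have "bounded {z. poly beta z = 0}" using poly_roots_finite[OF assms] by (rule finite_imp_bounded)
  then obtain b where "b > 0" "\<forall>z\<in>{z. poly beta z = 0}. norm z \<le> b" using bounded_pos by blast
  then show ?thesis by (intro exI[of _ b]) auto
qed

lemma sphere_min:
  fixes beta :: "complex poly"
  assumes "\<And>z. poly beta z = 0 \<Longrightarrow> cmod z < r" and r: "r > 0"
  shows "\<exists>c>0. \<forall>z. cmod z = r \<longrightarrow> c \<le> cmod (poly beta z)"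
proof -
  have ne: "sphere (0::complex) r \<noteq> {}" using r
    by (auto intro!: exI[of _ "complex_of_real r"] simp: dist_norm)
  have "continuous_on (sphere 0 r) (\<lambda>z. cmod (poly beta z))" by (intro continuous_intros)
  then obtain z0 where z0: "z0 \<in> sphere 0 r" "\<forall>y\<in>sphere 0 r. cmod (poly beta z0) \<le> cmod (poly beta y)"
    using continuous_attains_inf[OF compact_sphere ne] by blast
  have "poly beta z0 \<noteq> 0" using assms(1)[of z0] z0(1) by (auto simp: dist_norm)
  then show ?thesis using z0 by (intro exI[of _ "cmod (poly beta z0)"]) (auto simp: dist_norm)
qed

lemma le_of_forall_pos:
  fixes x y :: real
  assumes "\<And>d. d > 0 \<Longrightarrow> d \<le> d0 \<Longrightarrow> x \<le> y + d" "d0 > 0"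
  shows "x \<le> y"
proof (rule ccontr)
  assume nxy: "\<not> x \<le> y"
  define d where "d = min d0 ((x - y) / 2)"
  have d1: "d > 0" "d \<le> d0" using nxy assms(2) by (auto simp: d_def)
  have d2: "d \<le> (x - y) / 2" unfolding d_def by (rule min.cobounded2)
  have "x \<le> y + d" using assms(1)[OF d1] .
  then show False using nxy d2 by argo
qed

context
  fixes N :: nat and alpha Qs :: "nat \<Rightarrow> complex poly" and beta m u :: "complex poly"
    and H g :: "complex \<Rightarrow> complex" and Fset :: "(complex \<Rightarrow> complex) set"
  assumes H: "H holomorphic_on UNIV" and g: "g holomorphic_on UNIV"
    and hg: "\<And>i z. i \<le> N \<Longrightarrow> H z * (deriv ^^ i) g z = poly m z * exp (poly u z) * poly (Qs i) z"
    and hT: "\<And>T. \<exists>f\<in>Fset. \<forall>z. f z * poly beta z = H z * (\<Sum>i\<le>N. poly (alpha i) z * poly ((pderiv ^^ i) T) z)"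
    and beta: "beta \<noteq> 0"
    and Fh: "\<And>f. f \<in> Fset \<Longrightarrow> f holomorphic_on UNIV"
begin

private abbreviation "rho \<equiv> (\<Sum>i\<le>N. alpha i * Qs i)"

private lemma step: "d > 0 \<Longrightarrow> \<exists>f\<in>Fset. \<forall>z\<in>cball 0 R. cmod (f z * poly beta z -
            poly m z * exp (poly u z) * poly rho z) \<le> d"
  by (rule approx_step[OF H g hg hT])

lemma core_dvd: "beta dvd m * rho"
proof -
  obtain Bz where Bz: "Bz \<ge> 0" "\<And>z. poly beta z = 0 \<Longrightarrow> cmod z \<le> Bz" using roots_bound[OF beta] by blast
  define r where "r = Bz + 1"
  have r0: "r > 0" using Bz by (simp add: r_def)
  have rts: "cmod z < r" if "poly beta z = 0" for z using Bz(2)[OF that] by (simp add: r_def)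
  obtain c where c: "c > 0" "\<And>z. cmod z = r \<Longrightarrow> c \<le> cmod (poly beta z)"
    using sphere_min[OF rts r0] by blast
  define F where "F z = poly m z * exp (poly u z) * poly rho z" for z
  have "continuous_on UNIV F" unfolding F_def by (intro continuous_intros)
  then obtain PF where PF: "PF > 0" "\<And>z. z \<in> cball 0 r \<Longrightarrow> norm (F z) \<le> PF"
    using cont_bound[of F "cball 0 r"] by auto
  have "continuous_on UNIV (\<lambda>z. exp (- poly u z))" by (intro continuous_intros)
  then obtain Eu where Eu: "Eu > 0" "\<And>z. z \<in> cball 0 r \<Longrightarrow> norm (exp (- poly u z)) \<le> Eu"
    using cont_bound[of "\<lambda>z. exp (- poly u z)" "cball 0 r"] by auto
  define Cf where "Cf = (PF + c) / c"
  have Fb: "cmod (F z) \<le> Cf * cmod (poly beta z)" if z: "z \<in> cball 0 r" for z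
  proof (rule le_of_forall_pos[OF _ c(1)])
    fix d :: real assume d: "d > 0" "d \<le> c"
    obtain f where f: "f \<in> Fset" "\<forall>z\<in>cball 0 r. cmod (f z * poly beta z - F z) \<le> d"
      using step[OF d(1), of r] unfolding F_def by blast
    have fs: "cmod (f w) \<le> Cf" if w: "cmod w = r" for w
    proof -
      have wb: "w \<in> cball 0 r" using w by (simp add: dist_norm)
      have "cmod (f w) * cmod (poly beta w) \<le> cmod (F w) + d"
        using f(2)[rule_format, OF wb] norm_triangle_ineq2[of "f w * poly beta w" "F w"]
        by (simp add: norm_mult)
      also have "\<dots> \<le> PF + c" using PF(2)[OF wb] d by simp
      finally have "cmod (f w) * cmod (poly beta w) \<le> PF + c" .
      moreover have "c \<le> cmod (poly beta w)" using c(2)[OF w] .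
      ultimately have "cmod (f w) * c \<le> PF + c"
        by (meson c(1) less_imp_le mult_left_mono norm_ge_zero order_trans)
      then show ?thesis unfolding Cf_def using c(1) by (simp add: field_simps)
    qed
    have "cmod (f z) \<le> Cf"
      by (rule max_modulus_cball[OF Fh[OF f(1)] r0 fs]) (use z in \<open>auto simp: dist_norm\<close>)
    have "cmod (F z) \<le> cmod (f z * poly beta z) + d"
      using f(2)[rule_format, OF z] norm_triangle_ineq3[of "f z * poly beta z" "F z"]
      by (smt (verit, ccfv_threshold) norm_minus_commute norm_triangle_ineq2)
    also have "\<dots> \<le> Cf * cmod (poly beta z) + d"
      using \<open>cmod (f z) \<le> Cf\<close> by (simp add: norm_mult mult_right_mono)
    finally show "cmod (F z) \<le> Cf * cmod (poly beta z) + d" .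
  qed
  show ?thesis
  proof (rule poly_dvd_from_bound[OF beta rts])
    fix z :: complex assume z: "cmod z < r"
    then have zc: "z \<in> cball 0 r" by (simp add: dist_norm)
    have "poly (m * rho) z = exp (- poly u z) * F z"
      by (simp add: F_def exp_minus field_simps)
    then have "cmod (poly (m * rho) z) = cmod (exp (- poly u z)) * cmod (F z)" by (simp add: norm_mult)
    also have "\<dots> \<le> Eu * (Cf * cmod (poly beta z))"
      by (intro mult_mono Eu(2)[OF zc] Fb[OF zc]) (use Eu in auto)
    finally show "cmod (poly (m * rho) z) \<le> (Eu * Cf) * cmod (poly beta z)" by (simp add: mult_ac)
  qed
qed

lemma core_approx:
  assumes s: "m * rho = s * beta" and K: "compact K" and e: "e > 0"
  shows "\<exists>f\<in>Fset. \<forall>z\<in>K. cmod (f z - exp (poly u z) * poly s z) < e"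
proof -
  obtain Bz where Bz: "Bz \<ge> 0" "\<And>z. poly beta z = 0 \<Longrightarrow> cmod z \<le> Bz" using roots_bound[OF beta] by blast
  obtain RK where RK: "RK > 0" "\<And>z. z \<in> K \<Longrightarrow> cmod z \<le> RK"
    using compact_imp_bounded[OF K] bounded_pos by blast
  define r where "r = Bz + RK + 1"
  have r0: "r > 0" using Bz RK by (simp add: r_def)
  have rts: "cmod z < r" if "poly beta z = 0" for z using Bz(2)[OF that] RK(1) by (simp add: r_def)
  obtain c where c: "c > 0" "\<And>z. cmod z = r \<Longrightarrow> c \<le> cmod (poly beta z)"
    using sphere_min[OF rts r0] by blast
  obtain f where f: "f \<in> Fset" "\<forall>z\<in>cball 0 r. cmod (f z * poly beta z -
            poly m z * exp (poly u z) * poly rho z) \<le> c * e / 2"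
    using step[of "c * e / 2" r] c e by auto
  have eq: "poly m z * exp (poly u z) * poly rho z = exp (poly u z) * poly s z * poly beta z" for z
  proof -
    have "poly m z * poly rho z = poly s z * poly beta z" using arg_cong[OF s, of "\<lambda>p. poly p z"] by simp
    then show ?thesis by (metis mult.assoc mult.commute)
  qed
  have hol: "(\<lambda>z. f z - exp (poly u z) * poly s z) holomorphic_on UNIV"
    using Fh[OF f(1)] by (intro holomorphic_intros)
  have sph: "cmod (f w - exp (poly u w) * poly s w) \<le> e / 2" if w: "cmod w = r" for w
  proof -
    have wb: "w \<in> cball 0 r" using w by (simp add: dist_norm)
    have "cmod (f w - exp (poly u w) * poly s w) * cmod (poly beta w) \<le> c * e / 2"
      using f(2)[rule_format, OF wb] unfolding eq by (simp add: norm_mult[symmetric] algebra_simps)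
    moreover have "c * cmod (f w - exp (poly u w) * poly s w) \<le> cmod (poly beta w) * cmod (f w - exp (poly u w) * poly s w)"
      using c(2)[OF w] by (intro mult_right_mono) auto
    moreover have "cmod (poly beta w) * cmod (f w - exp (poly u w) * poly s w) = cmod (f w - exp (poly u w) * poly s w) * cmod (poly beta w)"
      by (rule mult.commute)
    ultimately have "c * cmod (f w - exp (poly u w) * poly s w) \<le> c * (e / 2)" by linarith
    then show ?thesis using c(1) by simp
  qed
  have half: "cmod (f z - exp (poly u z) * poly s z) \<le> e / 2" if z: "z \<in> K" for z
    by (rule max_modulus_cball[OF hol r0 sph]) (use RK(2)[OF z] Bz in \<open>auto simp: r_def\<close>)
  have "cmod (f z - exp (poly u z) * poly s z) < e" if z: "z \<in> K" for z
    using half[OF z] e by linarith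
  then show ?thesis using f(1) by blast
qed

end


lemma common_denom:
  fixes D :: dop
  shows "\<exists>alpha beta. beta \<noteq> 0 \<and> (\<forall>i\<le>N. coeff D i = Fract (alpha i) beta)"
proof (induction N)
  case 0
  obtain a b where "coeff D 0 = Fract a b" "b \<noteq> 0" by (cases "coeff D 0") auto
  then show ?case by (intro exI[of _ "\<lambda>_. a"] exI[of _ b]) auto
next
  case (Suc N)
  then obtain alpha beta where ab: "beta \<noteq> 0" "\<forall>i\<le>N. coeff D i = Fract (alpha i) beta" by blast
  obtain a b where a: "coeff D (Suc N) = Fract a b" "b \<noteq> 0" by (cases "coeff D (Suc N)") auto
  define alpha' where "alpha' i = (if i \<le> N then alpha i * b else a * beta)" for i
  have "coeff D i = Fract (alpha' i) (beta * b)" if "i \<le> Suc N" for i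
  proof (cases "i \<le> N")
    case True
    then show ?thesis using ab a(2) mult_fract_cancel[of b "alpha i" beta]
      by (simp add: alpha'_def mult.commute)
  next
    case False
    then have "i = Suc N" using that by simp
    then show ?thesis using ab a mult_fract_cancel[of beta a b]
      by (simp add: alpha'_def mult.commute)
  qed
  then show ?case using ab(1) a(2) by (intro exI[of _ alpha'] exI[of _ "beta * b"]) auto
qed

lemma sum_Fract_same:
  assumes "beta \<noteq> 0"
  shows "(\<Sum>i\<in>A. Fract (x i) beta) = Fract (\<Sum>i\<in>A. x i) beta"
proof (induction A rule: infinite_finite_induct)
  case (infinite A) then show ?case by (simp add: Zero_fract_def eq_fract)
next
  case empty then show ?case by (simp add: Zero_fract_def eq_fract)
next
  case (insert a A)
  then show ?case using assms
    by (simp add: mult_fract_cancel[of beta "x a + sum x A" beta, symmetric] algebra_simps)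
qed

lemma app_repr:
  assumes beta: "beta \<noteq> 0" and cf: "\<forall>i\<le>degree D. coeff D i = Fract (alpha i) beta"
    and it: "\<And>i. (L ^^ i) (to_fract q) = to_fract (Q i)"
  shows "app L D (to_fract q) = Fract (\<Sum>i\<le>degree D. alpha i * Q i) beta"
proof -
  have "app L D (to_fract q) = (\<Sum>i\<le>degree D. Fract (alpha i * Q i) beta)"
    unfolding app_def by (intro sum.cong refl) (simp add: cf it, simp add: to_fract_def)
  also have "\<dots> = Fract (\<Sum>i\<le>degree D. alpha i * Q i) beta" by (rule sum_Fract_same[OF beta])
  finally show ?thesis .
qed

lemma shift_iter_to_fract:
  "((\<lambda>y. rderiv y - to_fract (pderiv p) * y) ^^ i) (to_fract q) = to_fract ((ell p ^^ i) q)"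
  by (induction i) (simp_all add: ell_def)

lemma dapply_Phi_repr:
  assumes beta: "beta \<noteq> 0" and cf: "\<forall>i\<le>degree D. coeff D i = Fract (alpha i) beta"
  shows "dapply (Phi p D) (to_fract q) = Fract (\<Sum>i\<le>degree D. alpha i * (ell p ^^ i) q) beta"
  unfolding dapply_app app_Phi[OF derivlike_rderiv]
  by (rule app_repr[OF beta cf shift_iter_to_fract])

lemma dapply_repr:
  assumes beta: "beta \<noteq> 0" and cf: "\<forall>i\<le>degree D. coeff D i = Fract (alpha i) beta"
  shows "dapply D (to_fract q) = Fract (\<Sum>i\<le>degree D. alpha i * (pderiv ^^ i) q) beta"
  unfolding dapply_app by (rule app_repr[OF beta cf rderiv_pow_to_fract])


lemma m_of_nz: "adelic_data Lam Vs \<Longrightarrow> m_of Lam Vs \<noteq> 0"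
  unfolding m_of_def adelic_data_def by (auto simp: prod_zero_iff)

lemma V_closed:
  assumes ad: "adelic_data Lam Vs" and v: "poly v \<in> ent_closure (V_of Lam Vs)"
  shows "v \<in> V_of Lam Vs"
  unfolding V_of_def
proof
  fix lam assume lam: "lam \<in> Lam"
  then have sub: "csubspace_poly (Vs lam)" and "\<exists>r. \<forall>q. [:-lam, 1:] ^ r * q \<in> Vs lam"
    using ad unfolding adelic_data_def by auto
  then obtain r where r: "\<And>q. [:-lam, 1:] ^ r * q \<in> Vs lam" by blast
  have "V_of Lam Vs \<subseteq> Vs lam" using lam by (auto simp: V_of_def)
  then have "poly v \<in> ent_closure (Vs lam)" using v unfolding ent_closure_def by blast
  then show "v \<in> Vs lam" by (rule closed_point[OF sub r])
qed

lemma ent_closure_closed: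
  assumes h: "F holomorphic_on UNIV"
    and ap: "\<And>K e. compact K \<Longrightarrow> e > 0 \<Longrightarrow> \<exists>f\<in>ent_closure V. \<forall>z\<in>K. cmod (f z - F z) < e"
  shows "F \<in> ent_closure V"
  unfolding ent_closure_def
proof (intro CollectI conjI allI impI h)
  fix K :: "complex set" and e :: real assume Ke: "compact K \<and> (0::real) < e"
  obtain f where f: "f \<in> ent_closure V" "\<forall>z\<in>K. cmod (f z - F z) < e / 2" using ap[of K "e/2"] Ke by auto
  obtain v where v: "v \<in> V" "\<forall>z\<in>K. cmod (poly v z - f z) < e / 2"
    using ent_closureD[OF f(1), of K "e/2"] Ke by auto
  have "cmod (poly v z - F z) < e" if z: "z \<in> K" for z
  proof -
    have a: "cmod (poly v z - f z) < e / 2" using v(2) z by blast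
    have b: "cmod (f z - F z) < e / 2" using f(2) z by blast
    have "cmod (poly v z - F z) \<le> cmod (poly v z - f z) + cmod (f z - F z)"
      using norm_triangle_ineq[of "poly v z - f z" "f z - F z"] by simp
    then show ?thesis using a b by linarith
  qed
  then show "\<exists>v\<in>V. \<forall>z\<in>K. cmod (poly v z - F z) < e" using v(1) by blast
qed


lemma dir_sup:
  assumes ad: "adelic_data Lam Vs" and D: "D \<in> R_of (W_of Lam Vs)"
  shows "Phi p D \<in> R_of (gamma_act p Lam Vs)"
  unfolding R_of_def
proof (intro CollectI allI)
  fix q :: "complex poly"
  define V where "V = V_of Lam Vs"
  define m where "m = m_of Lam Vs"
  have m0: "m \<noteq> 0" using m_of_nz[OF ad] by (simp add: m_def)
  define N where "N = degree D"
  obtain alpha beta where ab: "beta \<noteq> 0" "\<forall>i\<le>N. coeff D i = Fract (alpha i) beta"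
    using common_denom[where D=D and N=N] by blast
  define rho where "rho = (\<Sum>i\<le>N. alpha i * (ell p ^^ i) q)"
  have rep: "dapply (Phi p D) (to_fract q) = Fract rho beta"
    unfolding rho_def N_def by (rule dapply_Phi_repr[OF ab(1)]) (use ab(2) in \<open>simp add: N_def\<close>)
  define Fset where "Fset = {poly v | v. v \<in> V}"
  have hT: "\<exists>f\<in>Fset. \<forall>z. f z * poly beta z = poly m z * (\<Sum>i\<le>N. poly (alpha i) z * poly ((pderiv ^^ i) T) z)" for T
  proof -
    have "dapply D (to_fract T) \<in> W_of Lam Vs" using D unfolding R_of_def by blast
    then obtain v where v: "v \<in> V" "dapply D (to_fract T) = Fract v m"
      unfolding W_of_def V_def m_def by blast
    have "dapply D (to_fract T) = Fract (\<Sum>i\<le>N. alpha i * (pderiv ^^ i) T) beta"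
      unfolding N_def by (rule dapply_repr[OF ab(1)]) (use ab(2) in \<open>simp add: N_def\<close>)
    then have "v * beta = (\<Sum>i\<le>N. alpha i * (pderiv ^^ i) T) * m"
      using v(2) ab(1) m0 by (simp add: eq_fract)
    then have "poly v z * poly beta z = poly m z * (\<Sum>i\<le>N. poly (alpha i) z * poly ((pderiv ^^ i) T) z)" for z
    proof -
      assume E: "v * beta = (\<Sum>i\<le>N. alpha i * (pderiv ^^ i) T) * m"
      have "poly (v * beta) z = poly ((\<Sum>i\<le>N. alpha i * (pderiv ^^ i) T) * m) z" by (simp only: E)
      then show ?thesis by (simp add: poly_sum algebra_simps)
    qed
    then show ?thesis using v(1) unfolding Fset_def by blast
  qed
  have Fh: "f \<in> Fset \<Longrightarrow> f holomorphic_on UNIV" for f unfolding Fset_def by (auto intro: poly_holo)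
  have hg: "poly m z * (deriv ^^ i) (\<lambda>z. exp (- poly p z) * poly q z) z =
      poly m z * exp (poly (- p) z) * poly ((ell p ^^ i) q) z" for i z
    by (simp add: higher_deriv_exp_poly)
  have gh: "(\<lambda>z. exp (- poly p z) * poly q z) holomorphic_on UNIV" by (intro holomorphic_intros)
  have mh: "poly m holomorphic_on UNIV" by (rule poly_holo)
  have "beta dvd m * rho"
    using core_dvd[OF mh gh hg hT ab(1) Fh] unfolding rho_def .
  then obtain s where s: "m * rho = beta * s" by (elim dvdE)
  have G: "(\<lambda>z. exp (poly (- p) z) * poly s z) \<in> ent_closure V"
    unfolding ent_closure_def
  proof (intro CollectI conjI allI impI)
    show "(\<lambda>z. exp (poly (- p) z) * poly s z) holomorphic_on UNIV" by (intro holomorphic_intros)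
    fix K :: "complex set" and e :: real assume Ke: "compact K \<and> (0::real) < e"
    then obtain f where f: "f \<in> Fset" "\<forall>z\<in>K. cmod (f z - exp (poly (- p) z) * poly s z) < e"
      using core_approx[OF mh gh hg hT ab(1) Fh, of s K e] s unfolding rho_def by (auto simp: mult.commute)
    then show "\<exists>v\<in>V. \<forall>z\<in>K. cmod (poly v z - exp (poly (- p) z) * poly s z) < e"
      unfolding Fset_def by blast
  qed
  have "s \<in> gamma_polys p V"
    unfolding gamma_polys_def
  proof (intro CollectI bexI[OF _ G] allI)
    fix z show "poly s z = exp (poly p z) * (exp (poly (- p) z) * poly s z)"
      by (simp add: exp_minus field_simps)
  qed
  moreover have "Fract rho beta = Fract s m"
    using s ab(1) m0 by (simp add: eq_fract mult.commute)
  ultimately show "dapply (Phi p D) (to_fract q) \<in> gamma_act p Lam Vs"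
    unfolding gamma_act_def rep V_def m_def by blast
qed

lemma dir_sub:
  assumes ad: "adelic_data Lam Vs" and D': "D' \<in> R_of (gamma_act p Lam Vs)"
  shows "Phi (-p) D' \<in> R_of (W_of Lam Vs)"
  unfolding R_of_def
proof (intro CollectI allI)
  fix q :: "complex poly"
  define V where "V = V_of Lam Vs"
  define m where "m = m_of Lam Vs"
  have m0: "m \<noteq> 0" using m_of_nz[OF ad] by (simp add: m_def)
  define N where "N = degree D'"
  obtain alpha beta where ab: "beta \<noteq> 0" "\<forall>i\<le>N. coeff D' i = Fract (alpha i) beta"
    using common_denom[where D=D' and N=N] by blast
  define rho where "rho = (\<Sum>i\<le>N. alpha i * (ell (-p) ^^ i) q)"
  have rep: "dapply (Phi (-p) D') (to_fract q) = Fract rho beta"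
    unfolding rho_def N_def by (rule dapply_Phi_repr[OF ab(1)]) (use ab(2) in \<open>simp add: N_def\<close>)
  define Fset where "Fset = ent_closure V"
  define H where "H z = exp (- poly p z) * poly m z" for z
  have hT: "\<exists>f\<in>Fset. \<forall>z. f z * poly beta z = H z * (\<Sum>i\<le>N. poly (alpha i) z * poly ((pderiv ^^ i) T) z)" for T
  proof -
    have "dapply D' (to_fract T) \<in> gamma_act p Lam Vs" using D' unfolding R_of_def by blast
    then obtain sT where sT: "sT \<in> gamma_polys p V" "dapply D' (to_fract T) = Fract sT m"
      unfolding gamma_act_def V_def m_def by blast
    obtain f where f: "f \<in> ent_closure V" "\<forall>z. poly sT z = exp (poly p z) * f z"
      using sT(1) unfolding gamma_polys_def by blast
    have "dapply D' (to_fract T) = Fract (\<Sum>i\<le>N. alpha i * (pderiv ^^ i) T) beta"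
      unfolding N_def by (rule dapply_repr[OF ab(1)]) (use ab(2) in \<open>simp add: N_def\<close>)
    then have "sT * beta = (\<Sum>i\<le>N. alpha i * (pderiv ^^ i) T) * m"
      using sT(2) ab(1) m0 by (simp add: eq_fract)
    then have e1: "poly sT z * poly beta z = poly m z * (\<Sum>i\<le>N. poly (alpha i) z * poly ((pderiv ^^ i) T) z)" for z
    proof -
      assume E: "sT * beta = (\<Sum>i\<le>N. alpha i * (pderiv ^^ i) T) * m"
      have "poly (sT * beta) z = poly ((\<Sum>i\<le>N. alpha i * (pderiv ^^ i) T) * m) z" by (simp only: E)
      then show ?thesis by (simp add: poly_sum algebra_simps)
    qed
    have "f z * poly beta z = H z * (\<Sum>i\<le>N. poly (alpha i) z * poly ((pderiv ^^ i) T) z)" for z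
    proof -
      have "f z = exp (- poly p z) * poly sT z" using f(2) by (simp add: exp_minus field_simps)
      then show ?thesis using e1[of z] by (simp add: H_def mult_ac)
    qed
    then show ?thesis using f(1) unfolding Fset_def by blast
  qed
  have Fh: "f \<in> Fset \<Longrightarrow> f holomorphic_on UNIV" for f unfolding Fset_def by (rule ent_closure_holo)
  have hg: "H z * (deriv ^^ i) (\<lambda>z. exp (- poly (-p) z) * poly q z) z =
      poly m z * exp (poly 0 z) * poly ((ell (-p) ^^ i) q) z" for i z
    by (simp only: higher_deriv_exp_poly) (simp add: H_def exp_minus field_simps)
  have gh: "(\<lambda>z. exp (- poly (-p) z) * poly q z) holomorphic_on UNIV" by (intro holomorphic_intros)
  have Hh: "H holomorphic_on UNIV" unfolding H_def by (intro holomorphic_intros)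
  have "beta dvd m * rho"
    using core_dvd[OF Hh gh hg hT ab(1) Fh] unfolding rho_def .
  then obtain s where s: "m * rho = beta * s" by (elim dvdE)
  have "poly s \<in> ent_closure V"
  proof (rule ent_closure_closed)
    show "poly s holomorphic_on UNIV" by (rule poly_holo)
    fix K :: "complex set" and e :: real assume "compact K" "e > 0"
    then obtain f where f: "f \<in> Fset" "\<forall>z\<in>K. cmod (f z - exp (poly 0 z) * poly s z) < e"
      using core_approx[OF Hh gh hg hT ab(1) Fh, of s K e] s unfolding rho_def by (auto simp: mult.commute)
    then show "\<exists>f\<in>ent_closure V. \<forall>z\<in>K. cmod (f z - poly s z) < e"
      unfolding Fset_def by auto
  qed
  then have "s \<in> V" unfolding V_def by (rule V_closed[OF ad])
  moreover have "Fract rho beta = Fract s m"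
    using s ab(1) m0 by (simp add: eq_fract mult.commute)
  ultimately show "dapply (Phi (-p) D') (to_fract q) \<in> W_of Lam Vs"
    unfolding W_of_def rep V_def m_def by blast
qed

theorem proposition5p2:
  fixes Lam :: "complex set" and Vs :: "complex \<Rightarrow> complex poly set" and p :: "complex poly"
  assumes "adelic_data Lam Vs"
  shows "R_of (gamma_act p Lam Vs) = Phi p ` R_of (W_of Lam Vs)"
proof
  show "R_of (gamma_act p Lam Vs) \<subseteq> Phi p ` R_of (W_of Lam Vs)"
  proof
    fix D' assume D': "D' \<in> R_of (gamma_act p Lam Vs)"
    have "D' = Phi p (Phi (-p) D')" by (simp add: Phi_inverse)
    then show "D' \<in> Phi p ` R_of (W_of Lam Vs)" using dir_sub[OF assms D'] by blast
  qed
  show "Phi p ` R_of (W_of Lam Vs) \<subseteq> R_of (gamma_act p Lam Vs)"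
    using dir_sup[OF assms] by blast
qed


end
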